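(* Let $P$ be a finite poset with height function $h$, let $\overline{P}$ be its dual poset, and let $H$ be an integer at least the maximal value of $h$ (so that $H-h$ is a height function on $\overline{P}$). Then for all $n\in\mathbb{Z}$, $$\mathsf{Z}_{\overline{P},H-h}([n]_q)=q^{(n-1)H}\,\sigma\big(\mathsf{Z}_{P,h}([n]_q)\big),$$ where $\sigma$ is the automorphism of $\mathbb{Q}(q)$ replacing $q$ by $1/q$ (applied to the element $\mathsf{Z}_{P,h}([n]_q)\in\mathbb{Q}(q)$).
   Context: $q$ is an indeterminate; $[n]_q=(q^n-1)/(q-1)$ for $n\in\mathbb{Z}$. A height function on a finite poset $R$ is $h:R\to\mathbb{N}$ with $h(x)<h(y)$ whenever $y$ covers $x$. The $q$-Zeta polynomial $\mathsf{Z}_{R,h}\in\mathbb{Q}(q)[x]$ is the unique polynomial with $\mathsf{Z}_{R,h}([n]_q)=\sum_{e_1\le\cdots\le e_{n-1}\text{ in }R}q^{h(e_1)+\cdots+h(e_{n-1})}$ for all $n\ge2$ (it exists, with degree $\max h$; explicitly $\sum_{k\ge1}\sum_{c_1<\cdots<c_k}q^{\sum h(c_i)}\mathsf{E}_{(h(c_1),\dots,h(c_k))}((x-[k+1]_q)/q^{k+1})$ where $\mathsf{E}_a([m]_q)=\sum_{m'\in\mathbb{N}^k,\sum m'_i=m}q^{\sum a_im'_i}$ for $m\ge0$). *)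

theory Defs
  imports Main "HOL-Computational_Algebra.Computational_Algebra" "HOL-Computational_Algebra.Field_as_Ring" "HOL-Computational_Algebra.Normalized_Fraction"
begin

type_synonym ratfun = "rat poly fract"

definition qvar :: ratfun where
  "qvar = to_fract [:0, 1:]"

definition qint :: "int \<Rightarrow> ratfun" where
  "qint n = (qvar powi n - 1) / (qvar - 1)"

definition qsubst_inv :: "rat poly \<Rightarrow> ratfun" where
  "qsubst_inv p = poly (map_poly (\<lambda>c. to_fract [:c:]) p) (inverse qvar)"

definition sigma :: "ratfun \<Rightarrow> ratfun" where
  "sigma x = qsubst_inv (fst (quot_of_fract x)) / qsubst_inv (snd (quot_of_fract x))"

definition covers :: "'a set \<Rightarrow> 'a rel \<Rightarrow> 'a \<Rightarrow> 'a \<Rightarrow> bool" where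
  "covers R r x y \<longleftrightarrow> x \<in> R \<and> y \<in> R \<and> (x, y) \<in> r \<and> x \<noteq> y \<and>
     \<not> (\<exists>z\<in>R. (x, z) \<in> r \<and> (z, y) \<in> r \<and> z \<noteq> x \<and> z \<noteq> y)"

definition height_function :: "'a set \<Rightarrow> 'a rel \<Rightarrow> ('a \<Rightarrow> nat) \<Rightarrow> bool" where
  "height_function R r h \<longleftrightarrow> (\<forall>x y. covers R r x y \<longrightarrow> h x < h y)"

definition multichains :: "'a set \<Rightarrow> 'a rel \<Rightarrow> nat \<Rightarrow> 'a list set" where
  "multichains R r m = {es. length es = m \<and> set es \<subseteq> R \<and> sorted_wrt (\<lambda>x y. (x, y) \<in> r) es}"

definition multichain_sum :: "'a set \<Rightarrow> 'a rel \<Rightarrow> ('a \<Rightarrow> nat) \<Rightarrow> nat \<Rightarrow> ratfun" where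
  "multichain_sum R r h m = (\<Sum>es\<in>multichains R r m. qvar ^ (\<Sum>e\<leftarrow>es. h e))"

definition qZeta :: "'a set \<Rightarrow> 'a rel \<Rightarrow> ('a \<Rightarrow> nat) \<Rightarrow> ratfun poly" where
  "qZeta R r h = (THE Z. \<forall>n::nat. n \<ge> 2 \<longrightarrow>
       poly Z (qint (int n)) = multichain_sum R r h (n - 1))"

end

theory Submission
  imports Defs
begin


abbreviation Cq :: "rat \<Rightarrow> ratfun" where "Cq c \<equiv> to_fract [:c:]"

lemma qvar_nz: "qvar \<noteq> 0" by (simp add: qvar_def)

lemma qsubst_inv_pCons: "qsubst_inv (pCons a p) = Cq a + inverse qvar * qsubst_inv p"
  by (simp add: qsubst_inv_def map_poly_pCons)

lemma qsubst_inv_0 [simp]: "qsubst_inv 0 = 0" by (simp add: qsubst_inv_def)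
lemma qsubst_inv_const [simp]: "qsubst_inv [:a:] = Cq a"
  by (simp add: qsubst_inv_def map_poly_pCons)

lemma qsubst_inv_add: "qsubst_inv (p + q) = qsubst_inv p + qsubst_inv q"
proof (induction p arbitrary: q rule: pCons_induct)
  case 0 then show ?case by simp
next
  case (pCons a p)
  show ?case
  proof (cases q rule: pCons_cases)
    case (pCons b q')
    then show ?thesis using pCons.IH[of q']
      by (simp add: qsubst_inv_pCons algebra_simps flip: to_fract_add)
  qed
qed

lemma qsubst_inv_smult: "qsubst_inv (smult a q) = Cq a * qsubst_inv q"
  by (induction q rule: pCons_induct) (simp_all add: qsubst_inv_pCons algebra_simps flip: to_fract_mult)

lemma qsubst_inv_pCons0: "qsubst_inv (pCons 0 p) = inverse qvar * qsubst_inv p"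
  by (simp add: qsubst_inv_pCons)

lemma qsubst_inv_mult: "qsubst_inv (p * q) = qsubst_inv p * qsubst_inv q"
  by (induction p rule: pCons_induct)
    (simp_all add: qsubst_inv_pCons qsubst_inv_add qsubst_inv_smult qsubst_inv_pCons0 algebra_simps)

lemma qsubst_inv_1 [simp]: "qsubst_inv 1 = 1"
  using qsubst_inv_const[of 1] by (simp add: pCons_one)

lemma poly_mapC_qvar: "poly (map_poly Cq p) qvar = to_fract p"
proof (induction p rule: pCons_induct)
  case 0 then show ?case by simp
next
  case (pCons a p)
  have "pCons a p = [:a:] + [:0,1:] * p" by simp
  then have "to_fract (pCons a p) = Cq a + qvar * to_fract p"
    by (metis qvar_def to_fract_add to_fract_mult)
  then show ?case using pCons by (simp add: map_poly_pCons)
qed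

lemma qsubst_inv_nz: assumes "b \<noteq> 0" shows "qsubst_inv b \<noteq> 0"
proof
  assume h: "qsubst_inv b = 0"
  have deg: "degree (map_poly Cq b) = degree b" by (rule degree_map_poly) simp
  have "reflect_poly (map_poly Cq b) = map_poly Cq (reflect_poly b)"
    by (rule poly_eqI) (simp add: coeff_reflect_poly coeff_map_poly deg)
  then have "to_fract (reflect_poly b) = qvar ^ degree (map_poly Cq b) * qsubst_inv b"
    using poly_reflect_poly_nz[OF qvar_nz, of "map_poly Cq b"]
    by (simp add: poly_mapC_qvar qsubst_inv_def)
  then show False using h assms by simp
qed

lemma sigma_Fract: assumes "b \<noteq> 0" shows "sigma (Fract a b) = qsubst_inv a / qsubst_inv b"
proof -
  obtain n d where nd: "quot_of_fract (Fract a b) = (n, d)" by (cases "quot_of_fract (Fract a b)")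
  have d: "d \<noteq> 0" using snd_quot_of_fract_nonzero[of "Fract a b"] nd by simp
  have "Fract n d = Fract a b" using Fract_quot_of_fract[of "Fract a b"] nd by simp
  then have "n * b = a * d" using eq_fract(1)[OF d assms] by simp
  then have "qsubst_inv n * qsubst_inv b = qsubst_inv a * qsubst_inv d"
    by (metis qsubst_inv_mult)
  then show ?thesis using nd qsubst_inv_nz[OF d] qsubst_inv_nz[OF assms]
    by (simp add: sigma_def field_simps)
qed

lemma sigma_add: "sigma (x + y) = sigma x + sigma y"
proof (induction x rule: Fract_induct)
  case (Fract a b)
  show ?case
  proof (induction y rule: Fract_induct)
    case (Fract c d)
    then show ?case using \<open>b \<noteq> 0\<close> qsubst_inv_nz[of b] qsubst_inv_nz[of d]
      by (simp add: sigma_Fract qsubst_inv_add qsubst_inv_mult field_simps)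
  qed
qed

lemma sigma_mult: "sigma (x * y) = sigma x * sigma y"
proof (induction x rule: Fract_induct)
  case (Fract a b)
  show ?case
  proof (induction y rule: Fract_induct)
    case (Fract c d)
    then show ?case using \<open>b \<noteq> 0\<close> qsubst_inv_nz[of b] qsubst_inv_nz[of d]
      by (simp add: sigma_Fract qsubst_inv_add qsubst_inv_mult field_simps)
  qed
qed

lemma sigma_1 [simp]: "sigma 1 = 1"
  by (simp add: sigma_def)

lemma sigma_0 [simp]: "sigma 0 = 0"
  by (simp add: sigma_def)

lemma sigma_sum: "sigma (sum f A) = (\<Sum>x\<in>A. sigma (f x))"
  by (induction A rule: infinite_finite_induct) (simp_all add: sigma_add)

lemma sigma_power: "sigma (x ^ n) = sigma x ^ n"
  by (induction n) (simp_all add: sigma_mult)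

lemma sigma_inverse: "sigma (inverse x) = inverse (sigma x)"
proof (cases "x = 0")
  case False
  then have "sigma x * sigma (inverse x) = 1" by (simp flip: sigma_mult)
  then show ?thesis by (metis inverse_unique)
qed simp

lemma sigma_qvar: "sigma qvar = inverse qvar"
proof -
  have "qvar = Fract [:0,1:] 1" by (simp add: qvar_def to_fract_def)
  have "sigma (Fract [:0,1:] 1) = qsubst_inv [:0,1:] / qsubst_inv 1" by (rule sigma_Fract) simp
  also have "\<dots> = inverse qvar" by (simp add: qsubst_inv_pCons pCons_one)
  finally show ?thesis using \<open>qvar = _\<close> by simp
qed

lemma sigma_powi: "sigma (qvar powi k) = qvar powi (- k)"
  by (cases "k \<ge> 0") (simp_all add: power_int_def sigma_power sigma_inverse sigma_qvar)



definition Elast :: "'a set \<Rightarrow> 'a rel \<Rightarrow> ('a \<Rightarrow> nat) \<Rightarrow> 'a \<Rightarrow> nat \<Rightarrow> ratfun" where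
  "Elast R r h x m = (\<Sum>es\<in>{es\<in>multichains R r m. last es = x}. qvar ^ (\<Sum>e\<leftarrow>es. h e))"

lemma finite_multichains: "finite R \<Longrightarrow> finite (multichains R r m)"
  by (rule finite_subset[OF _ finite_lists_length_eq[of R m]]) (auto simp: multichains_def)

context
  fixes P :: "'a set" and r :: "'a rel" and h :: "'a \<Rightarrow> nat"
  assumes fin: "finite P" and po: "partial_order_on P r" and hf: "height_function P r h"
begin

lemma refl': "x \<in> P \<Longrightarrow> (x, x) \<in> r"
  using po by (auto simp: partial_order_on_def preorder_on_def refl_on_def)

lemma trans': "(x, y) \<in> r \<Longrightarrow> (y, z) \<in> r \<Longrightarrow> (x, z) \<in> r"
  using po by (auto simp: partial_order_on_def preorder_on_def dest: transD)

lemma antisym': "(x, y) \<in> r \<Longrightarrow> (y, x) \<in> r \<Longrightarrow> x = y"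
  using po by (auto simp: partial_order_on_def dest: antisymD)

lemma strict_aux: "card {z\<in>P. (x,z)\<in>r \<and> (z,y)\<in>r} = N \<Longrightarrow> x \<in> P \<Longrightarrow> y \<in> P \<Longrightarrow> (x, y) \<in> r \<Longrightarrow> x \<noteq> y \<Longrightarrow> h x < h y"
proof (induction N arbitrary: x y rule: less_induct)
  case (less N)
  show ?case
  proof (cases "covers P r x y")
    case True
    then show ?thesis using hf by (auto simp: height_function_def)
  next
    case False
    then obtain z where z: "z \<in> P" "(x,z)\<in>r" "(z,y)\<in>r" "z\<noteq>x" "z\<noteq>y"
      using less.prems by (auto simp: covers_def)
    let ?I = "\<lambda>a b. {w\<in>P. (a,w)\<in>r \<and> (w,b)\<in>r}"
    have fI: "finite (?I x y)" using fin by simp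
    have s1: "?I x z \<subset> ?I x y"
    proof
      show "?I x z \<subseteq> ?I x y" using z trans' by blast
      have "y \<notin> ?I x z" using z antisym' by blast
      moreover have "y \<in> ?I x y" using less.prems refl' by blast
      ultimately show "?I x z \<noteq> ?I x y" by blast
    qed
    have s2: "?I z y \<subset> ?I x y"
    proof
      show "?I z y \<subseteq> ?I x y" using z trans' by blast
      have "x \<notin> ?I z y" using z antisym' by blast
      moreover have "x \<in> ?I x y" using less.prems refl' by blast
      ultimately show "?I z y \<noteq> ?I x y" by blast
    qed
    have "h x < h z"
      using less.IH[OF _ refl, of x z] psubset_card_mono[OF fI s1] less.prems z by auto
    moreover have "h z < h y"
      using less.IH[OF _ refl, of z y] psubset_card_mono[OF fI s2] less.prems z by auto
    ultimately show ?thesis by simp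
  qed
qed

lemma strict: "x \<in> P \<Longrightarrow> y \<in> P \<Longrightarrow> (x, y) \<in> r \<Longrightarrow> x \<noteq> y \<Longrightarrow> h x < h y"
  using strict_aux by blast

lemma sorted_le_last:
  assumes "sorted_wrt (\<lambda>x y. (x, y) \<in> r) es" "es \<noteq> []" "set es \<subseteq> P" "y \<in> set es"
  shows "(y, last es) \<in> r"
proof -
  have es: "es = butlast es @ [last es]" using assms(2) by simp
  show ?thesis
  proof (cases "y = last es")
    case True then show ?thesis using assms refl' last_in_set by (metis subsetD)
  next
    case False
    then have yb: "y \<in> set (butlast es)" using assms(4) es by (metis Un_iff empty_iff empty_set set_ConsD set_append)
    have "sorted_wrt (\<lambda>x y. (x, y) \<in> r) (butlast es @ [last es])" using assms(1) es by simp
    then show ?thesis using yb unfolding sorted_wrt_append by simp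
  qed
qed

lemma last_in_P: "es \<in> multichains P r m \<Longrightarrow> m \<ge> 1 \<Longrightarrow> last es \<in> P"
proof -
  assume a: "es \<in> multichains P r m" "m \<ge> 1"
  then have "es \<noteq> []" "set es \<subseteq> P" by (auto simp: multichains_def)
  then show ?thesis using last_in_set by blast
qed

lemma E_set:
  assumes "m \<ge> 1" "x \<in> P"
  shows "{es\<in>multichains P r (Suc m). last es = x} = (\<lambda>es. es @ [x]) ` {es\<in>multichains P r m. (last es, x) \<in> r}"
proof (intro set_eqI iffI)
  fix es assume "es \<in> {es\<in>multichains P r (Suc m). last es = x}"
  then have es: "length es = Suc m" "set es \<subseteq> P" "sorted_wrt (\<lambda>x y. (x, y) \<in> r) es" "last es = x"
    by (auto simp: multichains_def)
  define bs where "bs = butlast es"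
  have e: "es = bs @ [x]" using es by (metis append_butlast_last_id bs_def list.size(3) nat.simps(3))
  have bsne: "bs \<noteq> []" using es assms(1) e by auto
  have "bs \<in> multichains P r m" using es e by (auto simp: multichains_def sorted_wrt_append)
  moreover have "(last bs, x) \<in> r" using es e bsne sorted_wrt_append[of _ bs "[x]"] by auto
  ultimately show "es \<in> (\<lambda>es. es @ [x]) ` {es\<in>multichains P r m. (last es, x) \<in> r}" using e by blast
next
  fix es assume "es \<in> (\<lambda>es. es @ [x]) ` {es\<in>multichains P r m. (last es, x) \<in> r}"
  then obtain bs where bs: "es = bs @ [x]" "bs \<in> multichains P r m" "(last bs, x) \<in> r" by blast
  have bsp: "length bs = m" "set bs \<subseteq> P" "sorted_wrt (\<lambda>x y. (x, y) \<in> r) bs"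
    using bs by (auto simp: multichains_def)
  have ne: "bs \<noteq> []" using bsp assms by auto
  have "\<forall>y\<in>set bs. (y, x) \<in> r" using sorted_le_last[OF bsp(3) ne bsp(2)] bs(3) trans' by blast
  then show "es \<in> {es\<in>multichains P r (Suc m). last es = x}"
    using bs bsp assms by (auto simp: multichains_def sorted_wrt_append)
qed

lemma E_Suc:
  assumes "m \<ge> 1" "x \<in> P"
  shows "Elast P r h x (Suc m) = qvar ^ h x * (\<Sum>y\<in>{y\<in>P. (y, x) \<in> r}. Elast P r h y m)"
proof -
  let ?A = "{es\<in>multichains P r m. (last es, x) \<in> r}"
  have fA: "finite ?A" using finite_multichains[OF fin] by simp
  have "Elast P r h x (Suc m) = (\<Sum>es\<in>?A. qvar ^ (\<Sum>e\<leftarrow>es @ [x]. h e))"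
    unfolding Elast_def E_set[OF assms] by (subst sum.reindex) (auto intro: inj_onI)
  also have "\<dots> = qvar ^ h x * (\<Sum>es\<in>?A. qvar ^ (\<Sum>e\<leftarrow>es. h e))"
    by (simp add: sum_distrib_left power_add mult.commute)
  also have "(\<Sum>es\<in>?A. qvar ^ (\<Sum>e\<leftarrow>es. h e)) =
      (\<Sum>y\<in>{y\<in>P. (y, x) \<in> r}. \<Sum>es\<in>{es\<in>?A. last es = y}. qvar ^ (\<Sum>e\<leftarrow>es. h e))"
  proof (rule sum.group[symmetric, OF fA])
    show "finite {y\<in>P. (y, x) \<in> r}" using fin by simp
    show "last ` ?A \<subseteq> {y\<in>P. (y, x) \<in> r}"
    proof
      fix y assume "y \<in> last ` ?A"
      then obtain es where "es \<in> ?A" "y = last es" by blast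
      then show "y \<in> {y\<in>P. (y, x) \<in> r}" using assms(1) last_in_P by blast
    qed
  qed
  also have "\<dots> = (\<Sum>y\<in>{y\<in>P. (y, x) \<in> r}. Elast P r h y m)"
    unfolding Elast_def
  proof (rule sum.cong[OF refl])
    fix y assume "y \<in> {y\<in>P. (y, x) \<in> r}"
    then have "{es\<in>?A. last es = y} = {es\<in>multichains P r m. last es = y}" by auto
    then show "(\<Sum>es\<in>{es\<in>?A. last es = y}. qvar ^ (\<Sum>e\<leftarrow>es. h e)) =
      (\<Sum>es\<in>{es\<in>multichains P r m. last es = y}. qvar ^ (\<Sum>e\<leftarrow>es. h e))" by simp
  qed
  finally show ?thesis .
qed

lemma E_1:
  assumes "x \<in> P"
  shows "Elast P r h x 1 = qvar ^ h x"
proof -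
  have "{es\<in>multichains P r 1. last es = x} = {[x]}"
    using assms by (auto simp: multichains_def length_Suc_conv)
  then show ?thesis by (simp add: Elast_def)
qed

lemma Phi_split:
  assumes "m \<ge> 1"
  shows "multichain_sum P r h m = (\<Sum>x\<in>P. Elast P r h x m)"
  unfolding multichain_sum_def Elast_def
proof (rule sum.group[symmetric, OF finite_multichains[OF fin] fin])
  show "last ` multichains P r m \<subseteq> P"
    using assms last_in_P by blast
qed

end


lemma to_fract_power: "to_fract (p ^ n) = to_fract p ^ n"
  by (induction n) simp_all

lemma qvar_power: "qvar ^ n = to_fract (monom 1 n)"
proof -
  have "[:0,1:] = monom (1::rat) 1" by (simp add: monom_Suc)
  then show ?thesis by (simp add: qvar_def monom_power flip: to_fract_power)
qed

lemma qvar_pow_inj: "qvar ^ i = qvar ^ j \<Longrightarrow> i = j"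
proof -
  assume "qvar ^ i = qvar ^ j"
  then have "monom (1::rat) i = monom 1 j" by (simp add: qvar_power)
  then have "coeff (monom (1::rat) i) i = coeff (monom 1 j) i" by simp
  then show "i = j" by (auto split: if_splits)
qed

context
  fixes P :: "'a set" and r :: "'a rel" and h :: "'a \<Rightarrow> nat"
  assumes fin: "finite P" and po: "partial_order_on P r" and hf: "height_function P r h"
begin

lemma E_rep: "x \<in> P \<Longrightarrow> \<exists>c. (\<forall>j>h x. c j = 0) \<and> (\<forall>m\<ge>1. Elast P r h x m = (\<Sum>j\<le>h x. c j * qvar ^ (j * m)))"
proof (induction "h x" arbitrary: x rule: less_induct)
  case (less x)
  define a where "a = h x"
  define Q where "Q = qvar ^ a"
  define D where "D = {y\<in>P. (y,x)\<in>r \<and> y\<noteq>x}"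
  have fD: "finite D" using fin by (simp add: D_def)
  have hD: "\<And>y. y \<in> D \<Longrightarrow> h y < a"
    using strict[OF fin po hf] less.prems by (auto simp: D_def a_def)
  have "\<forall>y\<in>D. \<exists>c. (\<forall>j>h y. c j = 0) \<and> (\<forall>m\<ge>1. Elast P r h y m = (\<Sum>j\<le>h y. c j * qvar ^ (j * m)))"
    using less.hyps hD by (auto simp: D_def a_def)
  then obtain cf where cf: "\<And>y. y \<in> D \<Longrightarrow> (\<forall>j>h y. cf y j = 0) \<and> (\<forall>m\<ge>1. Elast P r h y m = (\<Sum>j\<le>h y. cf y j * qvar ^ (j * m)))"
    by metis
  define g where "g j = (\<Sum>y\<in>D. cf y j)" for j
  have T: "(\<Sum>y\<in>D. Elast P r h y m) = (\<Sum>j<a. g j * qvar ^ (j * m))" if m: "m \<ge> 1" for m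
  proof -
    have "(\<Sum>y\<in>D. Elast P r h y m) = (\<Sum>y\<in>D. \<Sum>j<a. cf y j * qvar ^ (j * m))"
    proof (rule sum.cong[OF refl])
      fix y assume y: "y \<in> D"
      have "Elast P r h y m = (\<Sum>j\<le>h y. cf y j * qvar ^ (j * m))" using cf[OF y] m by blast
      also have "\<dots> = (\<Sum>j<a. cf y j * qvar ^ (j * m))"
        by (rule sum.mono_neutral_left) (use hD[OF y] cf[OF y] in auto)
      finally show "Elast P r h y m = (\<Sum>j<a. cf y j * qvar ^ (j * m))" .
    qed
    also have "\<dots> = (\<Sum>j<a. \<Sum>y\<in>D. cf y j * qvar ^ (j * m))" by (rule sum.swap)
    also have "\<dots> = (\<Sum>j<a. g j * qvar ^ (j * m))" by (simp add: g_def sum_distrib_right)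
    finally show ?thesis .
  qed
  have ins: "{y\<in>P. (y, x) \<in> r} = insert x D" using less.prems refl'[OF fin po hf] by (auto simp: D_def)
  have rec: "Elast P r h x (Suc m) = Q * (Elast P r h x m + (\<Sum>j<a. g j * qvar ^ (j * m)))" if m: "m \<ge> 1" for m
    using E_Suc[OF fin po hf m less.prems] ins fD T[OF m] by (simp add: D_def Q_def a_def)
  define d where "d j = Q * g j / (qvar ^ j - Q)" for j
  define c0 where "c0 = (Q - (\<Sum>j<a. d j * qvar ^ j)) / Q"
  have Qnz: "Q \<noteq> 0" using qvar_nz by (simp add: Q_def)
  have dj: "d j * qvar ^ j = Q * (d j + g j)" if "j < a" for j
  proof -
    have "qvar ^ j - Q \<noteq> 0" using that qvar_pow_inj[of j a] by (auto simp: Q_def)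
    then show ?thesis by (simp add: d_def field_simps)
  qed
  have main: "Elast P r h x m = c0 * qvar ^ (a * m) + (\<Sum>j<a. d j * qvar ^ (j * m))" if m: "m \<ge> 1" for m
    using m
  proof (induction m rule: nat_induct_at_least)
    case base
    then show ?case using E_1[OF fin po hf less.prems] Qnz by (simp add: c0_def Q_def a_def)
  next
    case (Suc m)
    have "Elast P r h x (Suc m) = Q * (c0 * qvar ^ (a * m) + (\<Sum>j<a. d j * qvar ^ (j * m)) + (\<Sum>j<a. g j * qvar ^ (j * m)))"
      using rec[OF Suc.hyps] Suc.IH by simp
    also have "\<dots> = c0 * qvar ^ (a * Suc m) + (\<Sum>j<a. Q * (d j + g j) * qvar ^ (j * m))"
      by (simp add: Q_def algebra_simps sum_distrib_left power_add flip: sum.distrib)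
    also have "(\<Sum>j<a. Q * (d j + g j) * qvar ^ (j * m)) = (\<Sum>j<a. d j * qvar ^ (j * Suc m))"
      by (rule sum.cong[OF refl]) (simp add: dj power_add mult.assoc flip: mult.commute[of m])
    finally show ?case .
  qed
  define c where "c j = (if j < a then d j else if j = a then c0 else 0)" for j
  show ?case
  proof (intro exI conjI allI impI)
    fix j assume "j > h x" then show "c j = 0" by (simp add: c_def a_def)
  next
    fix m :: nat assume m: "m \<ge> 1"
    have "(\<Sum>j\<le>h x. c j * qvar ^ (j * m)) = (\<Sum>j<Suc a. c j * qvar ^ (j * m))"
      by (simp add: a_def lessThan_Suc_atMost)
    also have "\<dots> = c0 * qvar ^ (a * m) + (\<Sum>j<a. d j * qvar ^ (j * m))"
      by (simp add: c_def)
    finally show "Elast P r h x m = (\<Sum>j\<le>h x. c j * qvar ^ (j * m))" using main[OF m] by simp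
  qed
qed

lemma Phi_rep:
  assumes "\<forall>x\<in>P. h x < N"
  shows "\<exists>C. \<forall>m\<ge>1. multichain_sum P r h m = (\<Sum>j<N. C j * qvar ^ (j * m))"
proof -
  have "\<forall>x\<in>P. \<exists>c. (\<forall>j>h x. c j = 0) \<and> (\<forall>m\<ge>1. Elast P r h x m = (\<Sum>j\<le>h x. c j * qvar ^ (j * m)))"
    using E_rep by blast
  then obtain cf where cf: "\<And>x. x \<in> P \<Longrightarrow> (\<forall>j>h x. cf x j = 0) \<and> (\<forall>m\<ge>1. Elast P r h x m = (\<Sum>j\<le>h x. cf x j * qvar ^ (j * m)))"
    by metis
  show ?thesis
  proof (intro exI allI impI)
    fix m :: nat assume m: "m \<ge> 1"
    have "multichain_sum P r h m = (\<Sum>x\<in>P. Elast P r h x m)" by (rule Phi_split[OF fin po hf m])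
    also have "\<dots> = (\<Sum>x\<in>P. \<Sum>j<N. cf x j * qvar ^ (j * m))"
    proof (rule sum.cong[OF refl])
      fix y assume y: "y \<in> P"
      have "Elast P r h y m = (\<Sum>j\<le>h y. cf y j * qvar ^ (j * m))" using cf[OF y] m by blast
      also have "\<dots> = (\<Sum>j<N. cf y j * qvar ^ (j * m))"
        by (rule sum.mono_neutral_left) (use assms y cf[OF y] in auto)
      finally show "Elast P r h y m = (\<Sum>j<N. cf y j * qvar ^ (j * m))" .
    qed
    also have "\<dots> = (\<Sum>j<N. \<Sum>x\<in>P. cf x j * qvar ^ (j * m))" by (rule sum.swap)
    also have "\<dots> = (\<Sum>j<N. (\<Sum>x\<in>P. cf x j) * qvar ^ (j * m))" by (simp add: sum_distrib_right)
    finally show "multichain_sum P r h m = (\<Sum>j<N. (\<Sum>x\<in>P. cf x j) * qvar ^ (j * m))" .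
  qed
qed

end


lemma qvar_ne1: "qvar \<noteq> 1"
  using qvar_pow_inj[of 1 0] by auto

lemma qpow_add: "qvar powi (a + b) = qvar powi a * qvar powi b"
  using qvar_nz by (simp add: power_int_add)

lemma sum_list_nat_diff:
  assumes "\<forall>x\<in>set es. int (h x) \<le> H"
  shows "int (\<Sum>e\<leftarrow>es. nat (H - int (h e))) = int (length es) * H - int (\<Sum>e\<leftarrow>es. h e)"
  using assms by (induction es) (auto simp: algebra_simps)

lemma dual_sum:
  assumes "\<forall>x\<in>P. int (h x) \<le> H"
  shows "multichain_sum P (r\<inverse>) (\<lambda>x. nat (H - int (h x))) m
       = qvar powi (int m * H) * sigma (multichain_sum P r h m)"
proof -
  have eq: "multichains P (r\<inverse>) m = rev ` multichains P r m"
  proof (intro set_eqI iffI)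
    fix es assume "es \<in> multichains P (r\<inverse>) m"
    then have "rev es \<in> multichains P r m" by (auto simp: multichains_def sorted_wrt_rev)
    then show "es \<in> rev ` multichains P r m" by (metis image_eqI rev_rev_ident)
  next
    fix es assume "es \<in> rev ` multichains P r m"
    then show "es \<in> multichains P (r\<inverse>) m" by (auto simp: multichains_def sorted_wrt_rev)
  qed
  have tm: "qvar ^ (\<Sum>e\<leftarrow>rev es. nat (H - int (h e))) = qvar powi (int m * H) * sigma (qvar ^ (\<Sum>e\<leftarrow>es. h e))"
    if es: "es \<in> multichains P r m" for es
  proof -
    have l: "length es = m" "set es \<subseteq> P" using es by (auto simp: multichains_def)
    have ii: "int (\<Sum>e\<leftarrow>es. nat (H - int (h e))) = int m * H + - int (\<Sum>e\<leftarrow>es. h e)"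
      using sum_list_nat_diff[of es h H] l assms by auto
    have "qvar ^ (\<Sum>e\<leftarrow>rev es. nat (H - int (h e))) = qvar powi int (\<Sum>e\<leftarrow>es. nat (H - int (h e)))"
      by (simp add: rev_map[symmetric])
    also have "\<dots> = qvar powi (int m * H + - int (\<Sum>e\<leftarrow>es. h e))"
      by (simp only: ii)
    also have "\<dots> = qvar powi (int m * H) * qvar powi (- int (\<Sum>e\<leftarrow>es. h e))"
      by (rule qpow_add)
    also have "qvar powi (- int (\<Sum>e\<leftarrow>es. h e)) = sigma (qvar ^ (\<Sum>e\<leftarrow>es. h e))"
      using sigma_powi[of "int (\<Sum>e\<leftarrow>es. h e)"] by simp
    finally show ?thesis .
  qed
  show ?thesis
    unfolding multichain_sum_def eq
    by (subst sum.reindex) (simp_all add: sigma_sum sum_distrib_left tm)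
qed

definition LP :: "ratfun poly" where "LP = [:1, qvar - 1:]"

lemma poly_LP: "poly LP (qint n) = qvar powi n"
  using qvar_ne1 by (simp add: LP_def qint_def field_simps)

lemma qZeta_eq:
  assumes "\<forall>n::nat. n \<ge> 2 \<longrightarrow> poly Z (qint (int n)) = multichain_sum R r h (n - 1)"
  shows "qZeta R r h = Z"
  unfolding qZeta_def
proof (rule the_equality)
  show "\<forall>n::nat. n \<ge> 2 \<longrightarrow> poly Z (qint (int n)) = multichain_sum R r h (n - 1)" by fact
next
  fix Z' assume Z': "\<forall>n::nat. n \<ge> 2 \<longrightarrow> poly Z' (qint (int n)) = multichain_sum R r h (n - 1)"
  show "Z' = Z"
  proof (rule ccontr)
    assume "Z' \<noteq> Z"
    then have "Z' - Z \<noteq> 0" by simp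
    then have fr: "finite {x. poly (Z' - Z) x = 0}" by (rule poly_roots_finite)
    have sub: "(\<lambda>n. qint (int n)) ` {2..} \<subseteq> {x. poly (Z' - Z) x = 0}" using Z' assms by auto
    have inj: "inj_on (\<lambda>n. qint (int n)) {2..}"
    proof (rule inj_onI)
      fix a b :: nat assume "qint (int a) = qint (int b)"
      then have "qvar ^ a = qvar ^ b" using qvar_ne1 by (simp add: qint_def divide_cancel_right)
      then show "a = b" by (rule qvar_pow_inj)
    qed
    have "infinite ((\<lambda>n. qint (int n)) ` {2::nat..})"
      using finite_imageD[OF _ inj] by (metis infinite_Ici)
    then show False using finite_subset[OF sub fr] by simp
  qed
qed

lemma polyZ: "poly (\<Sum>j<N. smult (C j * qvar powi (- int j)) (LP ^ j)) (qint n)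
   = (\<Sum>j<N. C j * qvar powi (int j * (n - 1)))"
proof -
  have eqj: "C j * qvar powi (- int j) * (qvar powi n) ^ j = C j * qvar powi (int j * (n - 1))" for j
  proof -
    have "qvar powi (- int j) * (qvar powi n) ^ j = qvar powi (- int j + n * int j)"
      by (simp only: qpow_add power_int_power')
    also have "- int j + n * int j = int j * (n - 1)" by (simp add: algebra_simps)
    finally show ?thesis by (simp add: mult.assoc)
  qed
  have "poly (\<Sum>j<N. smult (C j * qvar powi (- int j)) (LP ^ j)) (qint n) = (\<Sum>j<N. C j * qvar powi (- int j) * (qvar powi n) ^ j)"
    by (simp add: poly_sum poly_LP)
  also have "\<dots> = (\<Sum>j<N. C j * qvar powi (int j * (n - 1)))" by (rule sum.cong[OF refl]) (rule eqj)
  finally show ?thesis .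
qed

lemma polyZb:
  assumes "\<forall>j<N. int j \<le> H"
  shows "poly (\<Sum>j<N. smult (sigma (C j) * qvar powi (- (H - int j))) (LP ^ nat (H - int j))) (qint n)
   = (\<Sum>j<N. sigma (C j) * qvar powi ((H - int j) * (n - 1)))"
proof -
  have eqj: "sigma (C j) * qvar powi (- (H - int j)) * (qvar powi n) ^ nat (H - int j) = sigma (C j) * qvar powi ((H - int j) * (n - 1))"
    if j: "j < N" for j
  proof -
    have "qvar powi (- (H - int j)) * (qvar powi n) ^ nat (H - int j) = qvar powi (- (H - int j) + n * int (nat (H - int j)))"
      by (simp only: qpow_add power_int_power')
    also have "int (nat (H - int j)) = H - int j" using assms j by simp
    also have "- (H - int j) + n * (H - int j) = (H - int j) * (n - 1)" by (simp add: algebra_simps)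
    finally show ?thesis by (simp add: mult.assoc)
  qed
  have "poly (\<Sum>j<N. smult (sigma (C j) * qvar powi (- (H - int j))) (LP ^ nat (H - int j))) (qint n)
     = (\<Sum>j<N. sigma (C j) * qvar powi (- (H - int j)) * (qvar powi n) ^ nat (H - int j))"
    by (simp add: poly_sum poly_LP)
  also have "\<dots> = (\<Sum>j<N. sigma (C j) * qvar powi ((H - int j) * (n - 1)))"
    by (rule sum.cong[OF refl]) (rule eqj, simp)
  finally show ?thesis .
qed

lemma keyG:
  assumes "\<forall>j<N. int j \<le> H"
  shows "poly (\<Sum>j<N. smult (sigma (C j) * qvar powi (- (H - int j))) (LP ^ nat (H - int j))) (qint n)
    = qvar powi ((n - 1) * H) * sigma (poly (\<Sum>j<N. smult (C j * qvar powi (- int j)) (LP ^ j)) (qint n))"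
proof -
  have eqj: "sigma (C j) * qvar powi ((H - int j) * (n - 1)) = qvar powi ((n - 1) * H) * (sigma (C j) * qvar powi (- (int j * (n - 1))))" for j
  proof -
    have "qvar powi ((H - int j) * (n - 1)) = qvar powi ((n - 1) * H + - (int j * (n - 1)))"
      by (simp add: algebra_simps)
    also have "\<dots> = qvar powi ((n - 1) * H) * qvar powi (- (int j * (n - 1)))"
      by (rule qpow_add)
    finally show ?thesis by simp
  qed
  have "poly (\<Sum>j<N. smult (sigma (C j) * qvar powi (- (H - int j))) (LP ^ nat (H - int j))) (qint n)
     = (\<Sum>j<N. sigma (C j) * qvar powi ((H - int j) * (n - 1)))" by (rule polyZb[OF assms])
  also have "\<dots> = (\<Sum>j<N. qvar powi ((n - 1) * H) * (sigma (C j) * qvar powi (- (int j * (n - 1)))))"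
    by (rule sum.cong[OF refl]) (rule eqj)
  also have "\<dots> = qvar powi ((n - 1) * H) * sigma (poly (\<Sum>j<N. smult (C j * qvar powi (- int j)) (LP ^ j)) (qint n))"
    unfolding polyZ sigma_sum sigma_mult sigma_powi sum_distrib_left by simp
  finally show ?thesis .
qed



theorem mainTheorem15:
  fixes P :: "'a set" and r :: "'a rel" and h :: "'a \<Rightarrow> nat" and H :: int
  assumes "finite P"
    and "partial_order_on P r"
    and "height_function P r h"
    and "\<forall>x\<in>P. int (h x) \<le> H"
  shows "\<forall>n::int. poly (qZeta P (r\<inverse>) (\<lambda>x. nat (H - int (h x)))) (qint n)
           = qvar powi ((n - 1) * H) * sigma (poly (qZeta P r h) (qint n))"
proof
  fix n :: int
  define N where "N = nat (H + 1)"
  have hN: "\<forall>x\<in>P. h x < N" using assms(4) by (auto simp: N_def)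
  have jN: "\<forall>j<N. int j \<le> H" by (auto simp: N_def)
  obtain C where C: "\<forall>m\<ge>1. multichain_sum P r h m = (\<Sum>j<N. C j * qvar ^ (j * m))"
    using Phi_rep[OF assms(1-3) hN] by blast
  define Z where "Z = (\<Sum>j<N. smult (C j * qvar powi (- int j)) (LP ^ j))"
  define Zb where "Zb = (\<Sum>j<N. smult (sigma (C j) * qvar powi (- (H - int j))) (LP ^ nat (H - int j)))"
  have Zk: "poly Z (qint (int k)) = multichain_sum P r h (k - 1)" if k: "k \<ge> 2" for k
  proof -
    have "poly Z (qint (int k)) = (\<Sum>j<N. C j * qvar powi (int j * (int k - 1)))"
      unfolding Z_def by (rule polyZ)
    also have "\<dots> = (\<Sum>j<N. C j * qvar ^ (j * (k - 1)))"
    proof (rule sum.cong[OF refl])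
      fix j
      have "int j * (int k - 1) = int (j * (k - 1))" using k by (simp add: of_nat_diff)
      then have "qvar powi (int j * (int k - 1)) = qvar ^ (j * (k - 1))" by (simp only: power_int_of_nat)
      then show "C j * qvar powi (int j * (int k - 1)) = C j * qvar ^ (j * (k - 1))" by (simp only:)
    qed
    also have "\<dots> = multichain_sum P r h (k - 1)" using C k by simp
    finally show ?thesis .
  qed
  have Zeq: "qZeta P r h = Z"
    by (rule qZeta_eq) (use Zk in blast)
  have Zbeq: "qZeta P (r\<inverse>) (\<lambda>x. nat (H - int (h x))) = Zb"
  proof (rule qZeta_eq, intro allI impI)
    fix k :: nat assume k: "2 \<le> k"
    have "poly Zb (qint (int k)) = qvar powi ((int k - 1) * H) * sigma (poly Z (qint (int k)))"
      unfolding Zb_def Z_def by (rule keyG[OF jN])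
    also have "\<dots> = qvar powi (int (k - 1) * H) * sigma (multichain_sum P r h (k - 1))"
      using k Zk[OF k] by (simp add: of_nat_diff)
    also have "\<dots> = multichain_sum P (r\<inverse>) (\<lambda>x. nat (H - int (h x))) (k - 1)"
      by (rule dual_sum[symmetric, OF assms(4)])
    finally show "poly Zb (qint (int k)) = multichain_sum P (r\<inverse>) (\<lambda>x. nat (H - int (h x))) (k - 1)" .
  qed
  show "poly (qZeta P (r\<inverse>) (\<lambda>x. nat (H - int (h x)))) (qint n)
           = qvar powi ((n - 1) * H) * sigma (poly (qZeta P r h) (qint n))"
    unfolding Zeq Zbeq Zb_def Z_def by (rule keyG[OF jN])
qed


end
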